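(* Let $d\ge1$ be fixed, let $P$ be a set of $n\ge2$ points in $\mathbb{R}^d$, let $\varepsilon\in(0,1)$, and let $q\in\mathbb{R}^d$ be a query point. Consider the greedy permutation graph $G$ built with parameter $\varepsilon/4$ and the greedy routing procedure for $q$ run with parameter $\varepsilon/4$, as described in the context. If an edge $p_j\to p_i$ is inspected by the procedure, $d(q,p_j)<d(q,p_i)$, and $r_i<(\varepsilon/8)\,d(q,p_j)$, then $p_j$ is a $(1+\varepsilon)$-approximate nearest neighbor of $q$ in $P$, i.e., $d(q,p_j)\le(1+\varepsilon)\min_{p\in P}d(q,p)$.
   Context: Distances are Euclidean. Greedy permutation: $p_1\in P$ is arbitrary; for $i\ge2$, $p_i$ is a point of $P\setminus P_{i-1}$ furthest from $P_{i-1}=\{p_1,\dots,p_{i-1}\}$. Radii: $r_1=\max_{p\in P}d(p,p_1)$ and $r_{i-1}=d(p_i,P_{i-1})$ for $i\ge2$ (so every point of $P$ is within distance $r_i$ of $P_i$). For a parameter $\delta\in(0,1/2)$, the graph built with parameter $\delta$ has edges $p_j\to p_i$ for all $i\ge2$ and all $p_j\in P_{i-1}$ with $d(p_j,p_i)\le 8r_{i-1}/\delta$; outgoing edges of each vertex are ordered by increasing index of the destination. The greedy routing procedure with parameter $\delta$: set $c=p_1$; scan the outgoing edges $c\to p_j$ in increasing order of $j$, and as soon as $d(q,p_j)\le(1-\delta/4)d(q,c)$, set $c=p_j$ and restart scanning from the new $c$; if all outgoing edges of $c$ are scanned without a move, return $c$. Here $\delta=\varepsilon/4$. *)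

theory Defs
  imports "HOL-Analysis.Analysis"
begin

definition prefix :: "(nat \<Rightarrow> 'a) \<Rightarrow> nat \<Rightarrow> 'a set" where
  "prefix p i = p ` {1..i}"

definition greedy_perm :: "'a::metric_space set \<Rightarrow> (nat \<Rightarrow> 'a) \<Rightarrow> bool" where
  "greedy_perm P p \<longleftrightarrow>
     bij_betw p {1..card P} P \<and>
     (\<forall>i\<in>{2..card P}. \<forall>x\<in>P - prefix p (i - 1).
        infdist x (prefix p (i - 1)) \<le> infdist (p i) (prefix p (i - 1)))"

text \<open>Radii: r_1 = max distance of a point of P to p 1; r_i = d(p_(i+1), P_i) for
  2 <= i <= n-1 (i.e. r_(i-1) = d(p_i, P_(i-1))); and r_n = 0 (every point of P
  lies in P_n).\<close>
definition rad :: "'a::metric_space set \<Rightarrow> (nat \<Rightarrow> 'a) \<Rightarrow> nat \<Rightarrow> real" where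
  "rad P p i =
     (if i = 1 then Max ((\<lambda>x. dist x (p 1)) ` P)
      else if i < card P then infdist (p (i + 1)) (prefix p i)
      else 0)"

definition gp_edge :: "'a::metric_space set \<Rightarrow> (nat \<Rightarrow> 'a) \<Rightarrow> real \<Rightarrow> nat \<Rightarrow> nat \<Rightarrow> bool" where
  "gp_edge P p \<delta> j i \<longleftrightarrow>
     2 \<le> i \<and> i \<le> card P \<and> 1 \<le> j \<and> j < i \<and>
     dist (p j) (p i) \<le> 8 * rad P p (i - 1) / \<delta>"

text \<open>States (j, k) of the greedy routing procedure: the current point is p j, and
  the outgoing edges of p j with destination index < k have been scanned without a
  move.  Scanning over destinations k = 1, 2, ..., card P in increasing order and
  skipping non-edges is the same as scanning the outgoing edges in increasing order
  of destination index.  Since every state has exactly one successor, the reachable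
  states are exactly the states visited by the (deterministic) procedure.\<close>
inductive route_state :: "'a::metric_space set \<Rightarrow> (nat \<Rightarrow> 'a) \<Rightarrow> real \<Rightarrow> 'a \<Rightarrow> nat \<Rightarrow> nat \<Rightarrow> bool"
  for P p \<delta> q where
  start: "route_state P p \<delta> q 1 1"
| move: "route_state P p \<delta> q j k \<Longrightarrow> k \<le> card P \<Longrightarrow> gp_edge P p \<delta> j k \<Longrightarrow>
         dist q (p k) \<le> (1 - \<delta> / 4) * dist q (p j) \<Longrightarrow> route_state P p \<delta> q k 1"
| skip: "route_state P p \<delta> q j k \<Longrightarrow> k \<le> card P \<Longrightarrow>
         \<not> (gp_edge P p \<delta> j k \<and> dist q (p k) \<le> (1 - \<delta> / 4) * dist q (p j)) \<Longrightarrow>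
         route_state P p \<delta> q j (Suc k)"

definition inspected :: "'a::metric_space set \<Rightarrow> (nat \<Rightarrow> 'a) \<Rightarrow> real \<Rightarrow> 'a \<Rightarrow> nat \<Rightarrow> nat \<Rightarrow> bool" where
  "inspected P p \<delta> q j i \<longleftrightarrow> route_state P p \<delta> q j i \<and> gp_edge P p \<delta> j i"

end

theory Submission
  imports Defs
begin

lemma cover_lemma:
  fixes P :: "'a::euclidean_space set" and p :: "nat \<Rightarrow> 'a"
  assumes fin: "finite P" and cP: "card P = n" and n2: "n \<ge> 2"
    and gp: "greedy_perm P p" and k1: "1 \<le> k" and kn: "k \<le> n" and xP: "x \<in> P"
  shows "\<exists>s. 1 \<le> s \<and> s \<le> k \<and> dist (p s) x \<le> rad P p k"
proof -
  have bij: "bij_betw p {1..n} P" using gp cP unfolding greedy_perm_def by simp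
  show ?thesis
  proof (cases "k = 1")
    case True
    have "dist x (p 1) \<le> Max ((\<lambda>x. dist x (p 1)) ` P)"
      using fin xP by (intro Max_ge) auto
    then show ?thesis using True by (auto simp: rad_def dist_commute intro!: exI[of _ 1])
  next
    case k1': False
    show ?thesis
    proof (cases "k = n")
      case True
      obtain s where s: "s \<in> {1..n}" "p s = x" using bij xP
        by (metis bij_betw_iff_bijections)
      have "rad P p k = 0" using True k1' cP by (simp add: rad_def)
      then show ?thesis using s True by auto
    next
      case False
      then have kn': "k < n" using kn by simp
      have radk: "rad P p k = infdist (p (k+1)) (prefix p k)"
        using k1' kn' cP by (simp add: rad_def)
      have ne: "prefix p k \<noteq> {}" using k1 unfolding prefix_def by auto
      have cl: "closed (prefix p k)" unfolding prefix_def by (intro finite_imp_closed) auto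
      show ?thesis
      proof (cases "x \<in> prefix p k")
        case True
        then obtain s where "s \<in> {1..k}" "x = p s" unfolding prefix_def by auto
        then show ?thesis using radk infdist_nonneg by (metis atLeastAtMost_iff dist_self)
      next
        case False
        have "infdist x (prefix p (k+1-1)) \<le> infdist (p (k+1)) (prefix p (k+1-1))"
        proof -
          have "Suc k \<in> {2..card P}" using kn' k1' k1 cP by auto
          then show ?thesis using gp xP False unfolding greedy_perm_def by fastforce
        qed
        then have le: "infdist x (prefix p k) \<le> rad P p k" using radk by simp
        obtain y where y: "y \<in> prefix p k" "infdist x (prefix p k) = dist x y"
          using infdist_attains_inf[OF cl ne] by metis
        then obtain s where "s \<in> {1..k}" "y = p s" unfolding prefix_def by auto
        then show ?thesis using y le by (metis atLeastAtMost_iff dist_commute)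
      qed
    qed
  qed
qed

lemma route_inv:
  fixes P :: "'a::euclidean_space set" and p :: "nat \<Rightarrow> 'a"
  assumes rs: "route_state P p (\<epsilon> / 4) q a b"
    and fin: "finite P" and cP: "card P = n" and n2: "n \<ge> 2"
    and gp: "greedy_perm P p" and e0: "0 < \<epsilon>" and e1: "\<epsilon> < 1" and xP: "x \<in> P"
  shows "1 \<le> a \<and> a \<le> n \<and>
    (dist q x \<le> (1 - \<epsilon>/2) * dist q (p a) \<longrightarrow>
      (\<forall>s. 1 \<le> s \<longrightarrow> s \<le> n \<longrightarrow> s < max a b \<longrightarrow> s \<noteq> a \<longrightarrow>
         \<epsilon>/8 * dist q (p a) \<le> dist (p s) x))"
  using rs
proof (induction rule: route_state.induct)
  case start
  then show ?case using n2 by auto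
next
  case (move j k)
  let ?L = "dist q (p j)" and ?L' = "dist q (p k)"
  have e: "1 \<le> j" "j < k" "2 \<le> k" "k \<le> n" using move.hyps(3) cP unfolding gp_edge_def by auto
  have L'L: "?L' \<le> ?L"
  proof -
    have "(1 - \<epsilon>/4/4) * ?L \<le> ?L" using e0 by (simp add: algebra_simps)
    then show ?thesis using move.hyps(4) by linarith
  qed
  show ?case
  proof (intro conjI impI allI)
    fix s assume D: "dist q x \<le> (1 - \<epsilon>/2) * ?L'" and s: "1 \<le> s" "s \<le> n" "s < max k 1" "s \<noteq> k"
    have DL: "dist q x \<le> (1 - \<epsilon>/2) * ?L"
    proof -
      have "(1 - \<epsilon>/2) * ?L' \<le> (1 - \<epsilon>/2) * ?L" using L'L e1 by (intro mult_left_mono) auto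
      then show ?thesis using D by linarith
    qed
    show "\<epsilon>/8 * ?L' \<le> dist (p s) x"
    proof (cases "s = j")
      case True
      have "?L \<le> dist q x + dist x (p j)" by (rule dist_triangle)
      then have "\<epsilon>/2 * ?L \<le> dist (p s) x" using DL True by (simp add: dist_commute algebra_simps)
      moreover have "\<epsilon>/8 * ?L' \<le> \<epsilon>/2 * ?L"
      proof -
        have "\<epsilon>/8 * ?L' \<le> \<epsilon>/8 * ?L" using L'L e0 by (intro mult_left_mono) auto
        moreover have "\<epsilon>/8 * ?L \<le> \<epsilon>/2 * ?L" using e0 by (intro mult_right_mono) auto
        ultimately show ?thesis by linarith
      qed
      ultimately show ?thesis by simp
    next
      case False
      have "s < max j k" using s e by auto
      then have "\<epsilon>/8 * ?L \<le> dist (p s) x" using move.IH DL s False by blast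
      moreover have "\<epsilon>/8 * ?L' \<le> \<epsilon>/8 * ?L" using L'L e0 by simp
      ultimately show ?thesis by simp
    qed
  qed (use e in auto)
next
  case (skip j k)
  let ?L = "dist q (p j)"
  have jn: "1 \<le> j" "j \<le> n" using skip.IH by simp_all
  have IH3: "\<And>s. dist q x \<le> (1 - \<epsilon>/2) * ?L \<Longrightarrow> 1 \<le> s \<Longrightarrow> s \<le> n \<Longrightarrow> s < max j k \<Longrightarrow> s \<noteq> j
     \<Longrightarrow> \<epsilon>/8 * ?L \<le> dist (p s) x" using skip.IH by blast
  show ?case
  proof (intro conjI impI allI)
    fix s assume D: "dist q x \<le> (1 - \<epsilon>/2) * ?L" and s: "1 \<le> s" "s \<le> n" "s < max j (Suc k)" "s \<noteq> j"
    show "\<epsilon>/8 * ?L \<le> dist (p s) x"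
    proof (cases "s < max j k")
      case True
      then show ?thesis using IH3 D s by blast
    next
      case False
      then have sk: "s = k" "j < k" using s by auto
      show ?thesis
      proof (rule ccontr)
        assume "\<not> ?thesis"
        then have close: "dist (p k) x < \<epsilon>/8 * ?L" using sk by simp
        have "0 < \<epsilon>/8 * ?L" using close by (meson le_less_trans zero_le_dist)
        then have Lpos: "0 < ?L" using e0 by (simp add: zero_less_mult_iff)
        have eL: "0 < \<epsilon> * ?L" using e0 Lpos by simp
        have "dist q (p k) \<le> dist q x + dist x (p k)" by (rule dist_triangle)
        then have qk: "dist q (p k) < (1 - \<epsilon>/2) * ?L + \<epsilon>/8 * ?L"
          using D close by (simp add: dist_commute)
        have closer: "dist q (p k) \<le> (1 - \<epsilon>/4/4) * ?L"
          using qk eL by (simp add: algebra_simps)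
        have j1: "1 \<le> j" using skip.IH by simp
        have "\<not> gp_edge P p (\<epsilon>/4) j k" using skip.hyps(3) closer by blast
        then have far: "8 * rad P p (k - 1) / (\<epsilon>/4) < dist (p j) (p k)"
          using sk j1 skip.hyps(2) cP unfolding gp_edge_def by auto
        have "dist (p j) (p k) \<le> dist (p j) q + dist q (p k)" by (rule dist_triangle)
        moreover have "(1 - \<epsilon>/2) * ?L + \<epsilon>/8 * ?L \<le> ?L" using eL by (simp add: algebra_simps)
        ultimately have "dist (p j) (p k) < 2 * ?L" using qk by (simp add: dist_commute)
        then have "8 * rad P p (k - 1) / (\<epsilon>/4) < 2 * ?L" using far by simp
        then have "16 * rad P p (k - 1) < \<epsilon> * ?L" using e0 by (simp add: field_simps)
        then have rk: "rad P p (k - 1) < \<epsilon>/8 * ?L" using eL by simp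
        obtain s' where s': "1 \<le> s'" "s' \<le> k - 1" "dist (p s') x \<le> rad P p (k - 1)"
        proof -
          have "1 \<le> k - 1" "k - 1 \<le> n" using sk j1 skip.hyps(2) cP by auto
          then show ?thesis using cover_lemma[OF fin cP n2 gp, of "k - 1" x] xP that by blast
        qed
        have cl': "dist (p s') x < \<epsilon>/8 * ?L" using s' rk by simp
        show False
        proof (cases "s' = j")
          case True
          have "?L \<le> dist q x + dist x (p j)" by (rule dist_triangle)
          then have "\<epsilon>/2 * ?L \<le> dist (p j) x" using D by (simp add: dist_commute algebra_simps)
          then show False using cl' True eL by simp
        next
          case False
          have "s' < max j k" "s' \<le> n" using s' sk skip.hyps(2) cP by auto
          then have "\<epsilon>/8 * ?L \<le> dist (p s') x" using IH3 D s' False by blast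
          then show False using cl' by simp
        qed
      qed
    qed
  qed (use jn in simp_all)
qed

theorem claim4p5:
  fixes P :: "'a::euclidean_space set" and n :: nat and p :: "nat \<Rightarrow> 'a"
    and \<epsilon> :: real and q :: 'a and i j :: nat
  assumes "finite P" and "card P = n" and "n \<ge> 2"
    and "greedy_perm P p"
    and "0 < \<epsilon>" and "\<epsilon> < 1"
    and "inspected P p (\<epsilon> / 4) q j i"
    and "dist q (p j) < dist q (p i)"
    and "rad P p i < (\<epsilon> / 8) * dist q (p j)"
  shows "dist q (p j) \<le> (1 + \<epsilon>) * Min ((\<lambda>x. dist q x) ` P)"
proof (rule ccontr)
  assume neg: "\<not> ?thesis"
  have Pne: "P \<noteq> {}" using assms(2,3) by auto
  have "Min ((\<lambda>x. dist q x) ` P) \<in> (\<lambda>x. dist q x) ` P"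
    using assms(1) Pne by (intro Min_in) auto
  then obtain x where xP: "x \<in> P" and xmin: "dist q x = Min ((\<lambda>x. dist q x) ` P)"
    by (metis imageE)
  let ?l = "dist q (p j)" and ?D = "dist q x"
  have lt: "(1 + \<epsilon>) * ?D < ?l" using neg xmin by simp
  have D0: "0 \<le> ?D" by simp
  have "?D \<le> (1 + \<epsilon>) * (1 - \<epsilon>/2) * ?D"
  proof -
    have ee: "\<epsilon> * \<epsilon> \<le> \<epsilon>" using assms(5,6) by (simp add: mult_le_cancel_left1)
    have "(1 + \<epsilon>) * (1 - \<epsilon>/2) = 1 + \<epsilon>/2 - \<epsilon>*\<epsilon>/2" by (simp add: field_simps)
    then have "1 \<le> (1 + \<epsilon>) * (1 - \<epsilon>/2)" using ee by linarith
    then have "1 * ?D \<le> (1 + \<epsilon>) * (1 - \<epsilon>/2) * ?D" by (rule mult_right_mono[OF _ D0])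
    then show ?thesis by simp
  qed
  also have "\<dots> = (1 - \<epsilon>/2) * ((1 + \<epsilon>) * ?D)" by simp
  also have "\<dots> \<le> (1 - \<epsilon>/2) * ?l" using lt assms(6) by (intro mult_left_mono) auto
  finally have Dl: "?D \<le> (1 - \<epsilon>/2) * ?l" .
  have rs: "route_state P p (\<epsilon>/4) q j i" and ge: "gp_edge P p (\<epsilon>/4) j i"
    using assms(7) unfolding inspected_def by auto
  have e: "1 \<le> j" "j < i" "2 \<le> i" "i \<le> n" using ge assms(2) unfolding gp_edge_def by auto
  have inv0: "dist q x \<le> (1 - \<epsilon>/2) * ?l \<longrightarrow> (\<forall>s. 1 \<le> s \<longrightarrow> s \<le> n \<longrightarrow> s < max j i \<longrightarrow> s \<noteq> j \<longrightarrow> \<epsilon>/8 * ?l \<le> dist (p s) x)"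
    using route_inv[OF rs assms(1-6) xP] by (rule conjunct2[OF conjunct2])
  have inv: "\<forall>s. 1 \<le> s \<longrightarrow> s \<le> n \<longrightarrow> s < max j i \<longrightarrow> s \<noteq> j \<longrightarrow> \<epsilon>/8 * ?l \<le> dist (p s) x"
    using inv0 Dl by (rule mp)
  have i1: "1 \<le> i" using e by simp
  obtain s where s: "1 \<le> s" "s \<le> i" "dist (p s) x \<le> rad P p i"
    using cover_lemma[OF assms(1-4) i1 e(4) xP] by blast
  have cl: "dist (p s) x < \<epsilon>/8 * ?l" using s assms(9) by simp
  have "dist q (p s) \<le> ?D + dist x (p s)" by (rule dist_triangle)
  moreover have "0 < ?l"
  proof -
    have "0 \<le> (1 + \<epsilon>) * ?D" using assms(5) D0 by simp
    then show ?thesis using lt by linarith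
  qed
  moreover have "0 < \<epsilon> * ?l" using calculation assms(5) by simp
  moreover have "(1 - \<epsilon>/2) * ?l + \<epsilon>/8 * ?l < ?l" using calculation by (simp add: algebra_simps)
  ultimately have qs: "dist q (p s) < ?l" using cl Dl by (simp add: dist_commute)
  have "s \<noteq> i" using qs assms(8) by auto
  moreover have "s \<noteq> j" using qs by auto
  ultimately have "\<epsilon>/8 * ?l \<le> dist (p s) x" using inv s e(2) e(4) by simp
  then show False using cl by simp
qed

end
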